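(* Let Assumptions (A1), (A3) and (A4) below hold and let $C>C(M'):=M'(\ell_{\max}-\ell^\star)+2\bar\lambda+\ell^\star p^\star$. Then there exist $\delta\in\mathcal L$ and $N_0\in\mathbb{N}$ such that for each prediction horizon $N\ge N_0$ the MPC feedback $\mu_N^\beta$ satisfies, for all $x\in\mathbb{X}_{\mathrm{pi}}(C,N_0)$, $$J^{\mathrm{av}}_\infty(x,\mu_N^\beta)\le\ell^\star+\delta(N).$$
   Context: System $x(k+1)=f(x(k),u(k))$ with $f:\mathbb{X}\times\mathbb{U}\to\mathbb{R}^n$, constraint sets $\mathbb{X}\subset\mathbb{R}^n$, $\mathbb{U}\subset\mathbb{R}^m$, stage cost $\ell:\mathbb{X}\times\mathbb{U}\to\mathbb{R}$. For $u\in\mathbb{U}^T$, $x_u(0,x)=x$, $x_u(k+1,x)=f(x_u(k,x),u(k))$; for a feedback $\mu$, $x_\mu(k,x)$ is the closed-loop trajectory with $u(k)=\mu(x_\mu(k,x))$; $\mathbb{U}^T(x)$ is the set of $u\in\mathbb{U}^T$ with $x_u(k,x)\in\mathbb{X}$ for $k=0,\dots,T$. $J_T(x,\mu)=\sum_{k=0}^{T-1}\ell(x_\mu(k,x),\mu(x_\mu(k,x)))$ and $J^{\mathrm{av}}_\infty(x,\mu)=\limsup_{T\to\infty}\frac1TJ_T(x,\mu)$. $[k]_p$ is $k$ mod $p$. A feasible $p$-periodic orbit is $\Pi\in(\mathbb{X}\times\mathbb{U})^p$ with $\Pi_\mathbb{X}([k+1]_p)=f(\Pi(k))$; $\|(x,u)\|_\Pi:=\min_k\|(x,u)-\Pi(k)\|$,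 $\|x\|_{\Pi_\mathbb{X}}:=\min_k\|x-\Pi_\mathbb{X}(k)\|$; $\ell^\star:=\inf$ over all feasible periodic orbits of $\frac1p\sum_{k=0}^{p-1}\ell(\Pi(k))$; $\Pi^\star$ is a fixed feasible $p^\star$-periodic orbit attaining $\ell^\star$. $\ell_{\max}:=\sup_{\mathbb{X}\times\mathbb{U}}\ell$. $\mathcal L$: continuous decreasing functions $[0,\infty)\to[0,\infty)$ tending to $0$. (A1) $f,\ell$ continuous, $\mathbb{X},\mathbb{U}$ compact. (A3) There are $\lambda:\mathbb{X}\to\mathbb{R}$, $\bar\lambda$ with $|\lambda|\le\bar\lambda$ on $\mathbb{X}$, and $\underline\alpha_{\tilde\ell}\in\mathcal K_\infty$ with $\ell(x,u)-\ell^\star+\lambda(x)-\lambda(f(x,u))\ge\underline\alpha_{\tilde\ell}(\|(x,u)\|_{\Pi^\star})$ for all $x\in\mathbb{X}$, $u\in\mathbb{U}^1(x)$. (A4) There are $\kappa>0$, $M'\in\mathbb{N}$, $\rho\in\mathcal K_\infty$ such that for all $z\in\{\Pi^\star_\mathbb{X}(k)\}$ and $x,y\in\mathbb{X}$ with $\|x-z\|,\|y-z\|\le\kappa$ there is $u\in\mathbb{U}^{M'}(x)$ with $x_u(M',x)=y$ and $\|(x_u(k,x),u(k))\|_{\Pi^\star}\le\rho(\max\{\|x\|_{\Pi^\star_\mathbb{X}},\|y\|_{\Pi^\star_\mathbb{X}}\})$ for $k=0,\dots,M'-1$. Discounted MPC: $\beta_N(k)=\frac{N-k}{N}$, $J_N^\beta(x,u)=\sum_{k=0}^{N-1}\beta_N(k)\ell(x_u(k,x),u(k))$,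 $V_N^\beta(x)=\inf_{u\in\mathbb{U}^N(x)}J_N^\beta(x,u)$, $u^\beta_{N,x}$ a minimizer, $\mu_N^\beta(x)=u^\beta_{N,x}(0)$. For $C\in\mathbb{R}$, $N_0\in\mathbb{N}$, $\mathbb{X}_{\mathrm{pi}}(C,N_0)$ is the set of $x\in\mathbb{X}$ with $V_N^\beta(x)-\frac{N+1}{2}\ell^\star+\lambda(x)+\bar\lambda\le C$ for all $N\ge N_0$. *)

theory Defs
  imports "HOL-Analysis.Analysis"
begin

fun traj :: "('a \<Rightarrow> 'b \<Rightarrow> 'a) \<Rightarrow> 'a \<Rightarrow> (nat \<Rightarrow> 'b) \<Rightarrow> nat \<Rightarrow> 'a" where
  "traj f x u 0 = x"
| "traj f x u (Suc k) = f (traj f x u k) (u k)"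

fun cltraj :: "('a \<Rightarrow> 'b \<Rightarrow> 'a) \<Rightarrow> ('a \<Rightarrow> 'b) \<Rightarrow> 'a \<Rightarrow> nat \<Rightarrow> 'a" where
  "cltraj f \<mu> x 0 = x"
| "cltraj f \<mu> x (Suc k) = f (cltraj f \<mu> x k) (\<mu> (cltraj f \<mu> x k))"

text \<open>Admissible control sequences U^T(x) (only the first T entries matter).\<close>
definition adm :: "('a \<Rightarrow> 'b \<Rightarrow> 'a) \<Rightarrow> 'a set \<Rightarrow> 'b set \<Rightarrow> nat \<Rightarrow> 'a \<Rightarrow> (nat \<Rightarrow> 'b) set" where
  "adm f X U T x = {u. (\<forall>k<T. u k \<in> U) \<and> (\<forall>k\<le>T. traj f x u k \<in> X)}"

definition JT :: "('a \<Rightarrow> 'b \<Rightarrow> 'a) \<Rightarrow> ('a \<Rightarrow> 'b \<Rightarrow> real) \<Rightarrow> nat \<Rightarrow> 'a \<Rightarrow> ('a \<Rightarrow> 'b) \<Rightarrow> real" where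
  "JT f l T x \<mu> = (\<Sum>k<T. l (cltraj f \<mu> x k) (\<mu> (cltraj f \<mu> x k)))"

definition Jav :: "('a \<Rightarrow> 'b \<Rightarrow> 'a) \<Rightarrow> ('a \<Rightarrow> 'b \<Rightarrow> real) \<Rightarrow> 'a \<Rightarrow> ('a \<Rightarrow> 'b) \<Rightarrow> ereal" where
  "Jav f l x \<mu> = limsup (\<lambda>T. ereal (JT f l T x \<mu> / real T))"

definition feasible_orbit :: "('a \<Rightarrow> 'b \<Rightarrow> 'a) \<Rightarrow> 'a set \<Rightarrow> 'b set \<Rightarrow> (nat \<Rightarrow> 'a \<times> 'b) \<Rightarrow> nat \<Rightarrow> bool" where
  "feasible_orbit f X U P p \<longleftrightarrow> p \<ge> 1 \<and> (\<forall>k<p. P k \<in> X \<times> U \<and>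
      fst (P ((k + 1) mod p)) = f (fst (P k)) (snd (P k)))"

definition orbit_avg :: "('a \<Rightarrow> 'b \<Rightarrow> real) \<Rightarrow> (nat \<Rightarrow> 'a \<times> 'b) \<Rightarrow> nat \<Rightarrow> real" where
  "orbit_avg l P p = (\<Sum>k<p. l (fst (P k)) (snd (P k))) / real p"

definition ell_star :: "('a \<Rightarrow> 'b \<Rightarrow> 'a) \<Rightarrow> 'a set \<Rightarrow> 'b set \<Rightarrow> ('a \<Rightarrow> 'b \<Rightarrow> real) \<Rightarrow> real" where
  "ell_star f X U l = Inf {orbit_avg l P p | P p. feasible_orbit f X U P p}"

definition ell_max :: "'a set \<Rightarrow> 'b set \<Rightarrow> ('a \<Rightarrow> 'b \<Rightarrow> real) \<Rightarrow> real" where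
  "ell_max X U l = Sup ((\<lambda>(x, u). l x u) ` (X \<times> U))"

definition orbit_dist :: "(nat \<Rightarrow> 'a \<times> 'b) \<Rightarrow> nat \<Rightarrow> ('a::real_normed_vector \<times> 'b::real_normed_vector) \<Rightarrow> real" where
  "orbit_dist P p z = Min ((\<lambda>k. norm (z - P k)) ` {..<p})"

definition orbitX_dist :: "(nat \<Rightarrow> 'a \<times> 'b) \<Rightarrow> nat \<Rightarrow> 'a::real_normed_vector \<Rightarrow> real" where
  "orbitX_dist P p x = Min ((\<lambda>k. norm (x - fst (P k))) ` {..<p})"

definition class_Kinf :: "(real \<Rightarrow> real) \<Rightarrow> bool" where
  "class_Kinf \<alpha> \<longleftrightarrow> continuous_on {0..} \<alpha> \<and> \<alpha> 0 = 0 \<and>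
     (\<forall>s t. 0 \<le> s \<and> s < t \<longrightarrow> \<alpha> s < \<alpha> t) \<and> filterlim \<alpha> at_top at_top"

definition class_L :: "(real \<Rightarrow> real) \<Rightarrow> bool" where
  "class_L \<delta> \<longleftrightarrow> continuous_on {0..} \<delta> \<and> (\<forall>t\<ge>0. \<delta> t \<ge> 0) \<and>
     (\<forall>s t. 0 \<le> s \<and> s \<le> t \<longrightarrow> \<delta> t \<le> \<delta> s) \<and> (\<delta> \<longlongrightarrow> 0) at_top"

definition Jbeta :: "('a \<Rightarrow> 'b \<Rightarrow> 'a) \<Rightarrow> ('a \<Rightarrow> 'b \<Rightarrow> real) \<Rightarrow> nat \<Rightarrow> 'a \<Rightarrow> (nat \<Rightarrow> 'b) \<Rightarrow> real" where
  "Jbeta f l N x u = (\<Sum>k<N. (real (N - k) / real N) * l (traj f x u k) (u k))"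

definition Vbeta :: "('a \<Rightarrow> 'b \<Rightarrow> 'a) \<Rightarrow> 'a set \<Rightarrow> 'b set \<Rightarrow> ('a \<Rightarrow> 'b \<Rightarrow> real) \<Rightarrow> nat \<Rightarrow> 'a \<Rightarrow> ereal" where
  "Vbeta f X U l N x = (INF u\<in>adm f X U N x. ereal (Jbeta f l N x u))"

definition mpc_feedback :: "('a \<Rightarrow> 'b \<Rightarrow> 'a) \<Rightarrow> 'a set \<Rightarrow> 'b set \<Rightarrow> ('a \<Rightarrow> 'b \<Rightarrow> real) \<Rightarrow> nat \<Rightarrow> ('a \<Rightarrow> 'b) \<Rightarrow> bool" where
  "mpc_feedback f X U l N \<mu> \<longleftrightarrow> (\<forall>x\<in>X. adm f X U N x \<noteq> {} \<longrightarrow>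
     (\<exists>u\<in>adm f X U N x. ereal (Jbeta f l N x u) = Vbeta f X U l N x \<and> \<mu> x = u 0))"

definition Xpi :: "('a \<Rightarrow> 'b \<Rightarrow> 'a) \<Rightarrow> 'a set \<Rightarrow> 'b set \<Rightarrow> ('a \<Rightarrow> 'b \<Rightarrow> real) \<Rightarrow> ('a \<Rightarrow> real) \<Rightarrow> real \<Rightarrow> real \<Rightarrow> nat \<Rightarrow> 'a set" where
  "Xpi f X U l lam lbar C N0 = {x\<in>X. \<forall>N\<ge>N0.
      Vbeta f X U l N x - ereal ((real N + 1) / 2 * ell_star f X U l) + ereal (lam x + lbar) \<le> ereal C}"

end

theory Submission
  imports Defs "HOL-Real_Asymp.Real_Asymp"
begin


lemma traj_prefix: "(\<forall>i<j. u i = v i) \<Longrightarrow> traj f x u j = traj f x v j"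
  by (induction j) auto

lemma traj_shift: "traj f (traj f x u a) (\<lambda>j. u (a + j)) d = traj f x u (a + d)"
  by (induction d) auto

lemma traj_concat_le:
  assumes "j \<le> a"
  shows "traj f x (\<lambda>j. if j < a then u j else w (j - a)) j = traj f x u j"
  using assms by (intro traj_prefix) auto

lemma traj_concat_ge:
  "traj f x (\<lambda>j. if j < a then u j else w (j - a)) (a + d) = traj f (traj f x u a) w d"
proof (induction d)
  case 0
  then show ?case using traj_concat_le[of a a f x u w] by simp
next
  case (Suc d)
  then show ?case by simp
qed

lemma abel_sum:
  fixes g :: "nat \<Rightarrow> real"
  shows "(\<Sum>j<n. real (n - j) * (g (Suc j) - g j)) = (\<Sum>j\<in>{1..n}. g j) - real n * g 0"
proof (induction n)
  case 0
  then show ?case by simp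
next
  case (Suc n)
  have "(\<Sum>j<Suc n. real (Suc n - j) * (g (Suc j) - g j))
      = (\<Sum>j<Suc n. real (n - j) * (g (Suc j) - g j) + (g (Suc j) - g j))"
    by (rule sum.cong) (auto simp: Suc_diff_le algebra_simps)
  also have "\<dots> = (\<Sum>j<n. real (n - j) * (g (Suc j) - g j)) + (g (Suc n) - g 0)"
    by (simp add: sum.distrib sum_lessThan_telescope)
  also have "\<dots> = (\<Sum>j\<in>{1..Suc n}. g j) - real (Suc n) * g 0"
    using Suc by (simp add: algebra_simps)
  finally show ?case .
qed

lemma weight_sum: "(\<Sum>j<n. real (n - j)) = real n * (real n + 1) / 2"
proof (induction n)
  case 0
  then show ?case by simp
next
  case (Suc n)
  have "(\<Sum>j<Suc n. real (Suc n - j)) = (\<Sum>j<Suc n. real (n - j) + 1)"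
    by (rule sum.cong) (auto simp: Suc_diff_le)
  also have "\<dots> = (\<Sum>j<n. real (n - j)) + real (Suc n)"
    by (simp add: sum.distrib)
  finally show ?case using Suc by (simp add: field_simps)
qed

lemma sum_if_less: "c \<ge> 0 \<Longrightarrow> (\<Sum>j<n. if j < M then c else (0::real)) \<le> real M * c"
proof (induction n)
  case 0 then show ?case by simp
next
  case (Suc n)
  have "(\<Sum>j<n. if j < M then c else (0::real)) = real (min n M) * c"
    by (induction n) (auto simp: min_def algebra_simps)
  then have "(\<Sum>j<Suc n. if j < M then c else (0::real)) = real (min (Suc n) M) * c"
    by (auto simp: min_def algebra_simps)
  then show ?case using Suc.prems by (simp add: mult_right_mono)
qed

lemma sum_split_shift:
  fixes F :: "nat \<Rightarrow> real"
  assumes "a \<le> m"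
  shows "(\<Sum>j<m. F j) = (\<Sum>j<a. F j) + (\<Sum>d<m - a. F (a + d))"
proof -
  have "(\<Sum>j<m. F j) = (\<Sum>j<a. F j) + (\<Sum>j\<in>{a..<m}. F j)"
    using assms by (metis atLeast0LessThan sum.atLeastLessThan_concat zero_le)
  also have "(\<Sum>j\<in>{a..<m}. F j) = (\<Sum>d<m - a. F (a + d))"
    using assms sum.shift_bounds_nat_ivl[of F 0 a "m - a"]
    by (simp add: atLeast0LessThan add.commute)
  finally show ?thesis .
qed

lemma rotate_mod_sum:
  fixes g :: "nat \<Rightarrow> real"
  assumes "p \<ge> 1"
  shows "(\<Sum>i<p. g ((i + 1) mod p)) = (\<Sum>i<p. g i)"
proof -
  obtain q where q: "p = Suc q" using assms by (cases p) auto
  have "(\<Sum>i<Suc q. g ((i + 1) mod Suc q)) = (\<Sum>i<q. g ((i + 1) mod Suc q)) + g 0"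
    by simp
  also have "(\<Sum>i<q. g ((i + 1) mod Suc q)) = (\<Sum>i<q. g (Suc i))"
    by (rule sum.cong) auto
  also have "(\<Sum>i<q. g (Suc i)) + g 0 = (\<Sum>i<Suc q. g i)"
    by (metis add.commute sum.lessThan_Suc_shift)
  finally show ?thesis using q by simp
qed


lemma limsup_avg_le:
  fixes a :: "nat \<Rightarrow> real"
  assumes "\<And>T. a T \<le> real T * c + K"
  shows "limsup (\<lambda>T. ereal (a T / real T)) \<le> ereal c"
proof -
  have ev: "eventually (\<lambda>T. ereal (a T / real T) \<le> ereal (c + K / real T)) sequentially"
    using eventually_ge_at_top[of "1::nat"]
  proof eventually_elim
    case (elim T)
    then have Tp: "0 < real T" by simp
    have "a T / real T \<le> (real T * c + K) / real T"
      using assms[of T] Tp by (intro divide_right_mono) auto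
    also have "\<dots> = c + K / real T" using Tp by (simp add: field_simps)
    finally show ?case by simp
  qed
  have "limsup (\<lambda>T. ereal (a T / real T)) \<le> limsup (\<lambda>T. ereal (c + K / real T))"
    by (rule Limsup_mono[OF ev])
  also have "limsup (\<lambda>T. ereal (c + K / real T)) = ereal c"
  proof (rule lim_imp_Limsup)
    show "\<not> trivial_limit (sequentially :: nat filter)" by simp
    have "(\<lambda>T. c + K / real T) \<longlonglongrightarrow> c + 0"
      by (intro tendsto_add tendsto_const lim_const_over_n)
    then show "(\<lambda>T. ereal (c + K / real T)) \<longlonglongrightarrow> ereal c" by (intro tendsto_ereal) simp
  qed
  finally show ?thesis .
qed

locale mpcset =
  fixes f :: "'a::real_normed_vector \<Rightarrow> 'b::real_normed_vector \<Rightarrow> 'a"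
    and X :: "'a set" and U :: "'b set" and l :: "'a \<Rightarrow> 'b \<Rightarrow> real"
    and P :: "nat \<Rightarrow> 'a \<times> 'b" and p :: nat
    and lam :: "'a \<Rightarrow> real" and lbar :: real and \<alpha> :: "real \<Rightarrow> real"
    and \<kappa> :: real and M' :: nat and ls :: real and Lmax :: real
  assumes orb: "feasible_orbit f X U P p" and avg: "orbit_avg l P p = ls"
    and lamb: "\<And>x. x \<in> X \<Longrightarrow> \<bar>lam x\<bar> \<le> lbar" and Ka: "class_Kinf \<alpha>"
    and A3: "\<And>x u. x \<in> X \<Longrightarrow> u \<in> U \<Longrightarrow> f x u \<in> X \<Longrightarrow>
               \<alpha> (orbit_dist P p (x, u)) \<le> l x u - ls + lam x - lam (f x u)"
    and kpos: "\<kappa> > 0"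
    and A4: "\<And>k x y. k < p \<Longrightarrow> x \<in> X \<Longrightarrow> y \<in> X \<Longrightarrow> norm (x - fst (P k)) \<le> \<kappa> \<Longrightarrow>
               norm (y - fst (P k)) \<le> \<kappa> \<Longrightarrow> \<exists>u\<in>adm f X U M' x. traj f x u M' = y"
    and Lmax: "\<And>x u. x \<in> X \<Longrightarrow> u \<in> U \<Longrightarrow> l x u \<le> Lmax"
begin

definition rt where "rt a b = l a b - ls + lam a - lam (f a b)"
definition S where "S n x u = (\<Sum>j<n. real (n - j) * l (traj f x u j) (u j))"
definition R where "R n x u = (\<Sum>j<n. real (n - j) * rt (traj f x u j) (u j))"
definition E where "E = max 0 (Lmax - ls + 2 * lbar)"
definition near where "near z \<longleftrightarrow> (\<exists>i<p. norm (z - fst (P i)) \<le> \<kappa>)"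

lemma p1: "p \<ge> 1" using orb by (simp add: feasible_orbit_def)

lemma Pin: assumes "i < p"
  shows "fst (P i) \<in> X" "snd (P i) \<in> U" "f (fst (P i)) (snd (P i)) = fst (P ((i + 1) mod p))"
  using orb assms by (auto simp: feasible_orbit_def mem_Times_iff)

lemma lbar_nn: "0 \<le> lbar"
  using lamb[OF Pin(1)[of 0]] p1 by linarith

lemma alpha_strict: "0 \<le> s \<Longrightarrow> s < t \<Longrightarrow> \<alpha> s < \<alpha> t"
  using Ka by (auto simp: class_Kinf_def)

lemma alpha_mono: "0 \<le> s \<Longrightarrow> s \<le> t \<Longrightarrow> \<alpha> s \<le> \<alpha> t"
  using alpha_strict by (cases "s = t") (auto intro: less_imp_le)

lemma alpha_nn: "0 \<le> s \<Longrightarrow> 0 \<le> \<alpha> s"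
  using alpha_mono[of 0 s] Ka by (simp add: class_Kinf_def)

lemma alpha_kpos: "0 < \<alpha> \<kappa>"
  using alpha_strict[of 0 \<kappa>] Ka kpos by (simp add: class_Kinf_def)

lemma orbit_dist_ge:
  assumes "\<And>k. k < p \<Longrightarrow> c \<le> norm (fst z - fst (P k))"
  shows "c \<le> orbit_dist P p z"
proof -
  have fin: "finite ((\<lambda>k. norm (z - P k)) ` {..<p})" by simp
  have ne: "(\<lambda>k. norm (z - P k)) ` {..<p} \<noteq> {}" using p1 by (auto simp: lessThan_empty_iff)
  have "\<forall>a\<in>(\<lambda>k. norm (z - P k)) ` {..<p}. c \<le> a"
  proof
    fix a assume "a \<in> (\<lambda>k. norm (z - P k)) ` {..<p}"
    then obtain k where k: "k < p" "a = norm (z - P k)" by auto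
    have "norm (fst (z - P k)) \<le> norm (z - P k)"
      using norm_fst_le[of "fst (z - P k)" "snd (z - P k)"] by (simp only: prod.collapse)
    then show "c \<le> a" using assms[OF k(1)] k by simp
  qed
  then show ?thesis unfolding orbit_dist_def using Min_ge_iff[OF fin ne] by blast
qed

lemma orbit_dist_nn: "0 \<le> orbit_dist P p z"
  by (rule orbit_dist_ge) simp

lemma rt_nn: "x \<in> X \<Longrightarrow> u \<in> U \<Longrightarrow> f x u \<in> X \<Longrightarrow> 0 \<le> rt x u"
  using A3[of x u] alpha_nn[OF orbit_dist_nn] unfolding rt_def by (meson order_trans)

lemma rt_le_E: "x \<in> X \<Longrightarrow> u \<in> U \<Longrightarrow> f x u \<in> X \<Longrightarrow> rt x u \<le> E"
  using Lmax[of x u] lamb[of x] lamb[of "f x u"] unfolding rt_def E_def by linarith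

lemma E_nn: "0 \<le> E" unfolding E_def by simp

lemma rt_far:
  assumes "x \<in> X" "u \<in> U" "f x u \<in> X" "\<not> near x"
  shows "\<alpha> \<kappa> \<le> rt x u"
proof -
  have "\<kappa> \<le> orbit_dist P p (x, u)"
    using assms(4) by (intro orbit_dist_ge) (auto simp: near_def)
  then have "\<alpha> \<kappa> \<le> \<alpha> (orbit_dist P p (x, u))" using kpos by (intro alpha_mono) auto
  then show ?thesis using A3[OF assms(1-3)] unfolding rt_def by linarith
qed

lemma rt_orbit: assumes "i < p" shows "rt (fst (P i)) (snd (P i)) = 0"
proof -
  define r where "r i = rt (fst (P i)) (snd (P i))" for i
  have nn: "\<And>i. i \<in> {..<p} \<Longrightarrow> 0 \<le> r i"
    unfolding r_def using Pin by (auto intro!: rt_nn simp: p1)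
  have r_eq: "r i = l (fst (P i)) (snd (P i)) - ls + lam (fst (P i)) - lam (fst (P ((i + 1) mod p)))"
    if "i < p" for i using Pin[OF that] by (simp add: r_def rt_def)
  have "(\<Sum>i<p. r i) = (\<Sum>i<p. l (fst (P i)) (snd (P i))) - real p * ls
        + (\<Sum>i<p. lam (fst (P i))) - (\<Sum>i<p. lam (fst (P ((i + 1) mod p))))"
    by (simp add: r_eq sum.distrib sum_subtractf)
  also have "(\<Sum>i<p. lam (fst (P ((i + 1) mod p)))) = (\<Sum>i<p. lam (fst (P i)))"
    using rotate_mod_sum[OF p1, of "\<lambda>i. lam (fst (P i))"] by simp
  also have "(\<Sum>i<p. l (fst (P i)) (snd (P i))) = real p * ls"
    using avg p1 by (simp add: orbit_avg_def field_simps)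
  finally have "(\<Sum>i<p. r i) = 0" by simp
  then have "\<forall>i\<in>{..<p}. r i = 0" using sum_nonneg_eq_0_iff[of "{..<p}" r] nn by auto
  then show ?thesis using assms by (simp add: r_def)
qed

lemma orbit_traj: assumes "i < p"
  shows "traj f (fst (P i)) (\<lambda>d. snd (P ((i + d) mod p))) d = fst (P ((i + d) mod p))"
proof (induction d)
  case 0 then show ?case using assms by simp
next
  case (Suc d)
  have "(i + d) mod p < p" using p1 by simp
  then show ?case using Suc Pin(3)[of "(i + d) mod p"] by (simp add: mod_Suc_eq)
qed

lemma admD: assumes "u \<in> adm f X U n x"
  shows "\<And>j. j < n \<Longrightarrow> u j \<in> U" "\<And>j. j \<le> n \<Longrightarrow> traj f x u j \<in> X"
  using assms by (auto simp: adm_def)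

lemma S_rot: "S n x u = ls * (real n * (real n + 1) / 2) + (\<Sum>j\<in>{1..n}. lam (traj f x u j))
    - real n * lam x + R n x u"
proof -
  define g where "g j = lam (traj f x u j)" for j
  have "S n x u = (\<Sum>j<n. real (n - j) * (ls + (g (Suc j) - g j) + rt (traj f x u j) (u j)))"
    unfolding S_def by (rule sum.cong) (auto simp: g_def rt_def)
  also have "\<dots> = ls * (\<Sum>j<n. real (n - j)) + (\<Sum>j<n. real (n - j) * (g (Suc j) - g j)) + R n x u"
    unfolding R_def sum_distrib_left sum.distrib[symmetric] by (rule sum.cong) (auto simp: algebra_simps)
  also have "\<dots> = ls * (real n * (real n + 1) / 2) + (\<Sum>j\<in>{1..n}. g j) - real n * g 0 + R n x u"
    unfolding abel_sum weight_sum by simp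
  finally show ?thesis by (simp add: g_def)
qed

lemma R_nn: assumes "u \<in> adm f X U n x" shows "0 \<le> R n x u"
  unfolding R_def
proof (rule sum_nonneg)
  fix j assume "j \<in> {..<n}"
  then have "traj f x u j \<in> X" "u j \<in> U" "f (traj f x u j) (u j) \<in> X"
    using admD[OF assms, of j] admD(2)[OF assms, of "Suc j"] by auto
  then show "0 \<le> real (n - j) * rt (traj f x u j) (u j)" by (simp add: rt_nn)
qed

lemma lam_sum_bound: assumes "u \<in> adm f X U n x"
  shows "\<bar>\<Sum>j\<in>{1..n}. lam (traj f x u j)\<bar> \<le> real n * lbar"
proof -
  have "\<bar>\<Sum>j\<in>{1..n}. lam (traj f x u j)\<bar> \<le> (\<Sum>j\<in>{1..n}. \<bar>lam (traj f x u j)\<bar>)"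
    by (rule sum_abs)
  also have "\<dots> \<le> (\<Sum>j\<in>{1..n}. lbar)"
    by (rule sum_mono) (auto intro!: lamb admD(2)[OF assms])
  finally show ?thesis by simp
qed

lemma S_lower: assumes "x \<in> X" "u \<in> adm f X U n x"
  shows "ls * (real n * (real n + 1) / 2) - real n * lbar - real n * lam x \<le> S n x u"
  using S_rot[of n x u] R_nn[OF assms(2)] lam_sum_bound[OF assms(2)] by linarith


lemma S_split: assumes "a \<le> m"
  shows "S m x u = (\<Sum>j<a. real (m - j) * l (traj f x u j) (u j))
     + S (m - a) (traj f x u a) (\<lambda>j. u (a + j))"
proof -
  have "S m x u = (\<Sum>j<a. real (m - j) * l (traj f x u j) (u j))
     + (\<Sum>d<m - a. real (m - (a + d)) * l (traj f x u (a + d)) (u (a + d)))"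
    unfolding S_def by (rule sum_split_shift[OF assms])
  also have "(\<Sum>d<m - a. real (m - (a + d)) * l (traj f x u (a + d)) (u (a + d)))
      = S (m - a) (traj f x u a) (\<lambda>j. u (a + j))"
    unfolding S_def traj_shift by (rule sum.cong) (auto simp: diff_diff_left)
  finally show ?thesis .
qed

lemma bridge:
  assumes z: "z \<in> X" and nz: "near z"
  obtains w where "\<And>j. w j \<in> U" "\<And>j. traj f z w j \<in> X"
    "\<And>n. R n z w \<le> real n * (real M' * E)"
proof -
  obtain i where i: "i < p" "norm (z - fst (P i)) \<le> \<kappa>" using nz by (auto simp: near_def)
  obtain ub where ub: "ub \<in> adm f X U M' z" "traj f z ub M' = fst (P i)"
    using A4[OF i(1) z Pin(1)[OF i(1)] i(2)] kpos by auto
  define ob where "ob d = snd (P ((i + d) mod p))" for d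
  define w where "w = (\<lambda>j. if j < M' then ub j else ob (j - M'))"
  have modp: "\<And>d. (i + d) mod p < p" using p1 by simp
  have tle: "\<And>j. j \<le> M' \<Longrightarrow> traj f z w j = traj f z ub j"
    unfolding w_def by (rule traj_concat_le)
  have tge: "\<And>d. traj f z w (M' + d) = fst (P ((i + d) mod p))"
    using traj_concat_ge[of f z M' ub ob] orbit_traj[OF i(1)] ub(2) unfolding w_def ob_def by simp
  have wU: "w j \<in> U" for j
  proof (cases "j < M'")
    case True then show ?thesis using admD(1)[OF ub(1)] by (simp add: w_def)
  next
    case False then show ?thesis using Pin(2)[OF modp[of "j - M'"]] by (simp add: w_def ob_def)
  qed
  have trX: "traj f z w j \<in> X" for j
  proof (cases "j \<le> M'")
    case True then show ?thesis using tle admD(2)[OF ub(1)] by simp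
  next
    case False
    then obtain d where "j = M' + d" by (metis le_add_diff_inverse nat_le_linear)
    then show ?thesis using tge Pin(1)[OF modp] by simp
  qed
  have Rb: "R n z w \<le> real n * (real M' * E)" for n
  proof -
    have "R n z w \<le> (\<Sum>j<n. if j < M' then real n * E else 0)"
      unfolding R_def
    proof (rule sum_mono)
      fix j assume "j \<in> {..<n}"
      have fX: "f (traj f z w j) (w j) \<in> X" using trX[of "Suc j"] by simp
      show "real (n - j) * rt (traj f z w j) (w j) \<le> (if j < M' then real n * E else 0)"
      proof (cases "j < M'")
        case True
        have "0 \<le> rt (traj f z w j) (w j)" "rt (traj f z w j) (w j) \<le> E"
          using rt_nn[OF trX wU fX] rt_le_E[OF trX wU fX] by auto
        moreover have "real (n - j) \<le> real n" by simp
        ultimately show ?thesis using True E_nn by (simp add: mult_mono)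
      next
        case False
        then obtain d where d: "j = M' + d" by (metis le_add_diff_inverse not_less)
        have "w j = snd (P ((i + d) mod p))" using False d by (simp add: w_def ob_def)
        then have "rt (traj f z w j) (w j) = 0" using d tge rt_orbit[OF modp] by simp
        then show ?thesis using False by simp
      qed
    qed
    also have "\<dots> \<le> real M' * (real n * E)"
      by (rule sum_if_less) (simp add: E_nn)
    finally show ?thesis by (simp add: algebra_simps)
  qed
  show ?thesis using that wU trX Rb by blast
qed

lemma adm_all: "(\<And>j. w j \<in> U) \<Longrightarrow> (\<And>j. traj f z w j \<in> X) \<Longrightarrow> w \<in> adm f X U n z"
  by (simp add: adm_def)

lemma S_bridge_bound:
  assumes "\<And>j. w j \<in> U" "\<And>j. traj f z w j \<in> X" "R n z w \<le> real n * (real M' * E)"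
  shows "S n z w \<le> ls * (real n * (real n + 1) / 2) + real n * lbar - real n * lam z + real n * (real M' * E)"
  using S_rot[of n z w] lam_sum_bound[OF adm_all[OF assms(1,2), of n]] assms(3) by linarith

lemma window:
  assumes x: "x \<in> X" and u: "u \<in> adm f X U N x" and Rb: "R N x u \<le> real N * Cb"
    and big: "real N * Cb < real h * real h * \<alpha> \<kappa>" and hN: "2 * h < N"
  obtains k where "1 \<le> k" "h < N - k" "N - k \<le> 2 * h" "near (traj f x u k)"
proof (rule ccontr)
  assume nt: "\<not> thesis"
  note th = that
  have far: "\<not> near (traj f x u k)" if "k \<in> {N - 2 * h..<N - h}" for k
  proof
    assume "near (traj f x u k)"
    moreover have k1: "N - 2 * h \<le> k" "k < N - h" using that by simp_all
    moreover have "1 \<le> k" using k1 hN by linarith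
    moreover have "h < N - k" using k1 by linarith
    moreover have "N - k \<le> 2 * h" using k1 by linarith
    ultimately have thesis using th by blast
    then show False using nt by blast
  qed
  have nn: "0 \<le> real (N - j) * rt (traj f x u j) (u j)" if "j < N" for j
  proof -
    have "traj f x u (Suc j) \<in> X" using admD(2)[OF u, of "Suc j"] that by simp
    then have "f (traj f x u j) (u j) \<in> X" by simp
    then show ?thesis using rt_nn[OF admD(2)[OF u] admD(1)[OF u]] that by simp
  qed
  have "(\<Sum>k\<in>{N - 2 * h..<N - h}. real h * \<alpha> \<kappa>) \<le> (\<Sum>k\<in>{N - 2 * h..<N - h}. real (N - k) * rt (traj f x u k) (u k))"
  proof (rule sum_mono)
    fix k assume kw: "k \<in> {N - 2 * h..<N - h}"
    have kw': "N - 2 * h \<le> k" "k < N - h" using kw by simp_all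
    have kN: "k < N" "Suc k \<le> N" using kw' by arith+
    have "\<alpha> \<kappa> \<le> rt (traj f x u k) (u k)"
      using rt_far[OF admD(2)[OF u] admD(1)[OF u] _ far[OF kw]] admD(2)[OF u kN(2)] kN by simp
    moreover have "h \<le> N - k" using kw' by arith
    then have "real h \<le> real (N - k)" by simp
    ultimately show "real h * \<alpha> \<kappa> \<le> real (N - k) * rt (traj f x u k) (u k)"
      using alpha_kpos by (intro mult_mono) auto
  qed
  also have "\<dots> \<le> R N x u"
    unfolding R_def
  proof (rule sum_mono2)
    show "{N - 2 * h..<N - h} \<subseteq> {..<N}" by auto
  qed (use nn in auto)
  finally have "real h * real h * \<alpha> \<kappa> \<le> R N x u" using hN by simp
  then show False using Rb big by linarith
qed


lemma step_core:
  assumes x: "x \<in> X" and u: "u \<in> adm f X U N x" and Rb: "R N x u \<le> real N * Cb" and Cb: "0 \<le> Cb"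
    and h1: "1 \<le> h" and k: "1 \<le> k" "h < N - k" "N - k \<le> 2 * h" "near (traj f x u k)"
  shows "\<exists>v\<in>adm f X U N (f x (u 0)). S N (f x (u 0)) v \<le> S N x u - real N * l x (u 0) + real N * ls
          + (2 * lbar + real N * Cb / real h + (2 * real h + 1) * (2 * lbar + real M' * E))"
proof -
  define xs where "xs j = traj f x u j" for j
  define L where "L j = l (xs j) (u j)" for j
  define q where "q = k - 1"
  define m where "m = N - k"
  define n where "n = N - q"
  have kq: "k = Suc q" using k(1) q_def by simp
  have kN: "k < N" using k(2) by arith
  have nm: "n = Suc m" using kN kq by (simp add: n_def m_def)
  have Nqm: "N = q + m + 1" using kN kq by (simp add: m_def)
  have hm: "h < m" "m \<le> 2 * h" using k(2,3) by (simp_all add: m_def)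
  have xX: "\<And>j. j \<le> N \<Longrightarrow> xs j \<in> X" using admD(2)[OF u] by (simp add: xs_def)
  have uU: "\<And>j. j < N \<Longrightarrow> u j \<in> U" using admD(1)[OF u] by simp
  have xsS: "\<And>j. xs (Suc j) = f (xs j) (u j)" by (simp add: xs_def)
  define z where "z = xs k"
  have zX: "z \<in> X" using xX kN by (simp add: z_def)
  obtain w where w: "\<And>j. w j \<in> U" "\<And>j. traj f z w j \<in> X" "\<And>n. R n z w \<le> real n * (real M' * E)"
  proof -
    have nz: "near z" using k(4) by (simp add: z_def xs_def)
    show ?thesis by (rule bridge[OF zX nz]) (rule that)
  qed
  define x1 where "x1 = f x (u 0)"
  have x1: "x1 = traj f x u 1" by (simp add: x1_def)
  define u1 where "u1 = (\<lambda>j. u (1 + j))"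
  have tu1: "traj f x1 u1 j = xs (1 + j)" for j
    unfolding x1 u1_def xs_def by (rule traj_shift)
  define v where "v = (\<lambda>j. if j < q then u1 j else w (j - q))"
  have tv_le: "traj f x1 v j = xs (1 + j)" if "j \<le> q" for j
    using traj_concat_le[OF that, of f x1 u1 w] tu1 by (simp add: v_def)
  have tv_ge: "traj f x1 v (q + d) = traj f z w d" for d
    using traj_concat_ge[of f x1 q u1 w d] tu1[of q] kq by (simp add: v_def z_def)
  have vadm: "v \<in> adm f X U N x1"
    unfolding adm_def
  proof (intro CollectI conjI allI impI)
    fix j assume "j < N"
    show "v j \<in> U"
    proof (cases "j < q")
      case True then show ?thesis using uU[of "1 + j"] kq kN by (simp add: v_def u1_def)
    next
      case False then show ?thesis using w(1) by (simp add: v_def)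
    qed
  next
    fix j assume "j \<le> N"
    show "traj f x1 v j \<in> X"
    proof (cases "j \<le> q")
      case True then show ?thesis using tv_le xX[of "1 + j"] kq kN by simp
    next
      case False
      then obtain d where "j = q + d" by (metis le_add_diff_inverse nat_le_linear)
      then show ?thesis using tv_ge w(2) by simp
    qed
  qed
  have shv: "(\<lambda>j. v (q + j)) = w" by (rule ext) (simp add: v_def)
  have SV: "S N x1 v = (\<Sum>j<q. real (N - j) * L (Suc j)) + S n z w"
  proof -
    have "S N x1 v = (\<Sum>j<q. real (N - j) * l (traj f x1 v j) (v j)) + S n (traj f x1 v q) (\<lambda>j. v (q + j))"
      unfolding n_def by (rule S_split) (use kN kq in simp)
    also have "(\<Sum>j<q. real (N - j) * l (traj f x1 v j) (v j)) = (\<Sum>j<q. real (N - j) * L (Suc j))"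
    proof (rule sum.cong)
      fix j assume "j \<in> {..<q}"
      then have "traj f x1 v j = xs (Suc j)" "v j = u (Suc j)"
        using tv_le[of j] by (auto simp: v_def u1_def)
      then show "real (N - j) * l (traj f x1 v j) (v j) = real (N - j) * L (Suc j)"
        by (simp add: L_def)
    qed simp
    also have "traj f x1 v q = z" using tv_ge[of 0] by simp
    finally show ?thesis using shv by simp
  qed
  define uk where "uk = (\<lambda>j. u (k + j))"
  have SU: "S N x u = real N * L 0 + (\<Sum>j<q. real (N - Suc j) * L (Suc j)) + S m z uk"
  proof -
    have "S N x u = (\<Sum>j<k. real (N - j) * L j) + S m z uk"
      unfolding m_def uk_def z_def xs_def L_def by (rule S_split) (use kN in simp)
    also have "(\<Sum>j<k. real (N - j) * L j) = real N * L 0 + (\<Sum>j<q. real (N - Suc j) * L (Suc j))"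
      unfolding kq sum.lessThan_Suc_shift by simp
    finally show ?thesis .
  qed
  have diffw: "(\<Sum>j<q. real (N - j) * L (Suc j)) = (\<Sum>j<q. real (N - Suc j) * L (Suc j)) + (\<Sum>j<q. L (Suc j))"
  proof -
    have "(\<Sum>j<q. real (N - j) * L (Suc j)) = (\<Sum>j<q. real (N - Suc j) * L (Suc j) + L (Suc j))"
    proof (rule sum.cong)
      fix j assume "j \<in> {..<q}"
      then have "j < N" using kq kN by simp
      then have "real (N - j) = real (N - Suc j) + 1" by (simp add: Suc_diff_Suc of_nat_diff)
      then show "real (N - j) * L (Suc j) = real (N - Suc j) * L (Suc j) + L (Suc j)"
        by (simp add: algebra_simps)
    qed simp
    then show ?thesis by (simp add: sum.distrib)
  qed
  have Ldec: "L i = ls + (lam (xs (Suc i)) - lam (xs i)) + rt (xs i) (u i)" for i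
    by (simp add: L_def rt_def xsS)
  have T: "(\<Sum>j<q. L (Suc j)) = real q * ls + (lam (xs k) - lam (xs 1)) + (\<Sum>j<q. rt (xs (Suc j)) (u (Suc j)))"
  proof -
    have "(\<Sum>j<q. L (Suc j)) = (\<Sum>j<q. ls + (lam (xs (Suc (Suc j))) - lam (xs (Suc j))) + rt (xs (Suc j)) (u (Suc j)))"
      by (rule sum.cong) (simp_all add: Ldec)
    also have "\<dots> = real q * ls + (\<Sum>j<q. lam (xs (Suc (Suc j))) - lam (xs (Suc j))) + (\<Sum>j<q. rt (xs (Suc j)) (u (Suc j)))"
      by (simp add: sum.distrib)
    also have "(\<Sum>j<q. lam (xs (Suc (Suc j))) - lam (xs (Suc j))) = lam (xs k) - lam (xs 1)"
      using sum_lessThan_telescope[of "\<lambda>j. lam (xs (Suc j))" q] kq by simp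
    finally show ?thesis .
  qed
  have rtnn: "0 \<le> rt (xs j) (u j)" if "j < N" for j
    using rt_nn[OF xX uU[OF that]] xX[of "Suc j"] that xsS[of j] by simp
  have rtsum: "real n * (\<Sum>j<q. rt (xs (Suc j)) (u (Suc j))) \<le> R N x u"
  proof -
    have "real n * (\<Sum>j<q. rt (xs (Suc j)) (u (Suc j))) = (\<Sum>j<q. real n * rt (xs (Suc j)) (u (Suc j)))"
      by (simp add: sum_distrib_left)
    also have "\<dots> \<le> (\<Sum>j<q. real (N - Suc j) * rt (xs (Suc j)) (u (Suc j)))"
    proof (rule sum_mono)
      fix j assume "j \<in> {..<q}"
      then have "n \<le> N - Suc j" "Suc j < N" using kq kN by (auto simp: n_def)
      then show "real n * rt (xs (Suc j)) (u (Suc j)) \<le> real (N - Suc j) * rt (xs (Suc j)) (u (Suc j))"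
        using rtnn[of "Suc j"] by (intro mult_right_mono) auto
    qed
    also have "\<dots> \<le> real N * rt (xs 0) (u 0) + (\<Sum>j<q. real (N - Suc j) * rt (xs (Suc j)) (u (Suc j)))"
      using rtnn[of 0] kN by simp
    also have "\<dots> = (\<Sum>j<k. real (N - j) * rt (xs j) (u j))"
      unfolding kq sum.lessThan_Suc_shift by simp
    also have "\<dots> \<le> (\<Sum>j<N. real (N - j) * rt (xs j) (u j))"
    proof (rule sum_mono2)
      show "{..<k} \<subseteq> {..<N}" using kN by auto
    qed (use rtnn in auto)
    also have "\<dots> = R N x u" by (simp add: R_def xs_def)
    finally show ?thesis .
  qed
  have hpos: "0 < real h" using h1 by simp
  have nh: "real h \<le> real n" using hm nm by simp
  have rtb: "(\<Sum>j<q. rt (xs (Suc j)) (u (Suc j))) \<le> real N * Cb / real h"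
  proof -
    have "real n * (\<Sum>j<q. rt (xs (Suc j)) (u (Suc j))) \<le> real N * Cb" using rtsum Rb by linarith
    moreover have "0 < real n" using nh hpos by linarith
    ultimately have "(\<Sum>j<q. rt (xs (Suc j)) (u (Suc j))) \<le> real N * Cb / real n"
      by (simp add: pos_le_divide_eq mult.commute)
    also have "\<dots> \<le> real N * Cb / real h"
      using nh hpos Cb by (intro divide_left_mono) auto
    finally show ?thesis .
  qed
  have ukadm: "uk \<in> adm f X U m z"
    unfolding adm_def
  proof (intro CollectI conjI allI impI)
    fix j assume "j < m" then show "uk j \<in> U" using uU[of "k + j"] by (simp add: uk_def m_def)
  next
    fix j assume "j \<le> m"
    then show "traj f z uk j \<in> X"
      using xX[of "k + j"] traj_shift[of f x u k j] kN by (simp add: uk_def z_def xs_def m_def)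
  qed
  have Slow: "ls * (real m * (real m + 1) / 2) - real m * lbar - real m * lam z \<le> S m z uk"
    by (rule S_lower[OF zX ukadm])
  have Sup: "S n z w \<le> ls * (real n * (real n + 1) / 2) + real n * lbar - real n * lam z + real n * (real M' * E)"
    by (rule S_bridge_bound[OF w(1,2) w(3)])
  have lz: "\<bar>lam z\<bar> \<le> lbar" "\<bar>lam (xs k)\<bar> \<le> lbar" "\<bar>lam (xs 1)\<bar> \<le> lbar"
    using lamb zX xX[of k] xX[of 1] kN by (auto simp: z_def)
  have quad: "ls * (real n * (real n + 1) / 2) - ls * (real m * (real m + 1) / 2) = ls * real n"
    using nm by (simp add: field_simps)
  have KK: "real n * (2 * lbar + real M' * E) \<le> (2 * real h + 1) * (2 * lbar + real M' * E)"
  proof (rule mult_right_mono)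
    show "real n \<le> 2 * real h + 1" using hm nm by simp
    show "0 \<le> 2 * lbar + real M' * E" using lbar_nn E_nn by simp
  qed
  have Nreal: "real N = real q + real n" using Nqm nm by simp
  have nreal: "real n = real m + 1" using nm by simp
  have big: "S N x1 v \<le> S N x u - real N * L 0 + real N * ls
          + (2 * lbar + real N * Cb / real h + (2 * real h + 1) * (2 * lbar + real M' * E))"
  proof -
    have e1: "S N x1 v - (S N x u - real N * L 0) = (\<Sum>j<q. L (Suc j)) + S n z w - S m z uk"
      using SV SU diffw by simp
    have e2: "S n z w - S m z uk \<le> ls * real n + real n * lbar + real m * lbar - lam z + real n * (real M' * E)"
    proof -
      have "real n * lam z = real m * lam z + lam z" by (simp add: nreal algebra_simps)
      then show ?thesis using Sup Slow quad by linarith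
    qed
    have f1: "real n * (2 * lbar + real M' * E) = 2 * (real n * lbar) + real n * (real M' * E)"
      by (simp add: algebra_simps)
    have f2: "real N * ls = real q * ls + ls * real n" using Nreal by (simp add: algebra_simps)
    have f3: "real m * lbar + lbar = real n * lbar" using nreal by (simp add: algebra_simps)
    show ?thesis using e1 e2 T rtb lz KK f1 f2 f3 by linarith
  qed
  have L0: "L 0 = l x (u 0)" by (simp add: L_def xs_def)
  show ?thesis
  proof (rule bexI[of _ v])
    show "v \<in> adm f X U N (f x (u 0))" using vadm by (simp only: x1_def)
    show "S N (f x (u 0)) v \<le> S N x u - real N * l x (u 0) + real N * ls
          + (2 * lbar + real N * Cb / real h + (2 * real h + 1) * (2 * lbar + real M' * E))"
      using big unfolding L0 x1_def .
  qed
qed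


lemma Jbeta_S: "Jbeta f l N x u = S N x u / real N"
  unfolding Jbeta_def S_def by (simp add: sum_divide_distrib)

lemma one_step:
  assumes h1: "1 \<le> h" and hN: "2 * h < N" and big: "real N * Cb < real h * real h * \<alpha> \<kappa>"
    and CbD: "2 * lbar + real M' * E + \<alpha> \<kappa> \<le> Cb"
    and epsd: "eps = (2 * lbar + real N * Cb / real h + (2 * real h + 1) * (2 * lbar + real M' * E)) / real N"
    and epsk: "eps \<le> \<alpha> \<kappa>"
    and y: "y \<in> X" and u: "u \<in> adm f X U N y"
    and opt: "\<And>v. v \<in> adm f X U N y \<Longrightarrow> Jbeta f l N y u \<le> Jbeta f l N y v"
    and W: "Jbeta f l N y u - ls * (real N + 1) / 2 + lam y + lbar \<le> Cb"
  shows "\<exists>v\<in>adm f X U N (f y (u 0)). Jbeta f l N (f y (u 0)) v \<le> Jbeta f l N y u - l y (u 0) + ls + eps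
        \<and> Jbeta f l N (f y (u 0)) v - ls * (real N + 1) / 2 + lam (f y (u 0)) + lbar \<le> Cb"
proof -
  have Npos: "0 < real N" using hN by simp
  have ME: "0 \<le> real M' * E" by (simp add: E_nn)
  have Cbpos: "0 \<le> Cb" using CbD lbar_nn ME alpha_kpos by linarith
  have SJ: "S N y u = real N * Jbeta f l N y u" using Npos by (simp add: Jbeta_S)
  have Rb: "R N y u \<le> real N * Cb"
  proof -
    have r: "S N y u = ls * (real N * (real N + 1) / 2) + (\<Sum>j\<in>{1..N}. lam (traj f y u j)) - real N * lam y + R N y u"
      by (rule S_rot)
    have lb: "\<bar>\<Sum>j\<in>{1..N}. lam (traj f y u j)\<bar> \<le> real N * lbar" by (rule lam_sum_bound[OF u])
    have "real N * (Jbeta f l N y u - ls * (real N + 1) / 2 + lam y + lbar) \<le> real N * Cb"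
      using W Npos by (intro mult_left_mono) auto
    moreover have "real N * (Jbeta f l N y u - ls * (real N + 1) / 2 + lam y + lbar)
        = S N y u - ls * (real N * (real N + 1) / 2) + real N * lam y + real N * lbar"
      using SJ by (simp add: algebra_simps)
    ultimately show ?thesis using r lb by linarith
  qed
  obtain k where k: "1 \<le> k" "h < N - k" "N - k \<le> 2 * h" "near (traj f y u k)"
    using window[OF y u Rb big hN] by blast
  obtain v where v: "v \<in> adm f X U N (f y (u 0))"
    and Sv: "S N (f y (u 0)) v \<le> S N y u - real N * l y (u 0) + real N * ls
          + (2 * lbar + real N * Cb / real h + (2 * real h + 1) * (2 * lbar + real M' * E))"
    using step_core[OF y u Rb Cbpos h1 k] by blast
  define y1 where "y1 = f y (u 0)"
  have br: "2 * lbar + real N * Cb / real h + (2 * real h + 1) * (2 * lbar + real M' * E) = real N * eps"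
    using Npos epsd by simp
  have "S N y1 v \<le> real N * (Jbeta f l N y u - l y (u 0) + ls + eps)"
    using Sv br SJ unfolding y1_def by (simp add: algebra_simps)
  then have J1: "Jbeta f l N y1 v \<le> Jbeta f l N y u - l y (u 0) + ls + eps"
    using Npos by (simp add: Jbeta_S pos_divide_le_eq mult.commute)
  have u0: "u 0 \<in> U" using admD(1)[OF u, of 0] hN by simp
  have y1X: "y1 \<in> X" using admD(2)[OF u, of 1] hN by (simp add: y1_def)
  have rt0: "0 \<le> rt y (u 0)" using rt_nn[OF y u0] y1X by (simp add: y1_def)
  have rteq: "rt y (u 0) = l y (u 0) - ls + lam y - lam y1" by (simp add: rt_def y1_def)
  have W1: "Jbeta f l N y1 v - ls * (real N + 1) / 2 + lam y1 + lbar \<le> Cb"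
  proof (cases "near y")
    case True
    obtain w where w: "\<And>j. w j \<in> U" "\<And>j. traj f y w j \<in> X" "\<And>n. R n y w \<le> real n * (real M' * E)"
      by (rule bridge[OF y True]) blast
    have wadm: "w \<in> adm f X U N y" by (rule adm_all[OF w(1,2)])
    have "S N y w \<le> ls * (real N * (real N + 1) / 2) + real N * lbar - real N * lam y + real N * (real M' * E)"
      by (rule S_bridge_bound[OF w(1,2) w(3)])
    also have "\<dots> = real N * (ls * (real N + 1) / 2 + lbar - lam y + real M' * E)"
      by (simp add: algebra_simps)
    finally have "Jbeta f l N y w \<le> ls * (real N + 1) / 2 + lbar - lam y + real M' * E"
      using Npos by (simp add: Jbeta_S pos_divide_le_eq mult.commute)
    then have "Jbeta f l N y u \<le> ls * (real N + 1) / 2 + lbar - lam y + real M' * E"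
      using opt[OF wadm] by linarith
    then show ?thesis using J1 rteq rt0 epsk CbD by linarith
  next
    case False
    have "\<alpha> \<kappa> \<le> rt y (u 0)" using rt_far[OF y u0 _ False] y1X by (simp add: y1_def)
    then show ?thesis using J1 rteq W epsk by linarith
  qed
  show ?thesis using v J1 W1 unfolding y1_def by blast
qed


lemma closed_loop:
  assumes h1: "1 \<le> h" and hN: "2 * h < N" and big: "real N * Cb < real h * real h * \<alpha> \<kappa>"
    and CbD: "2 * lbar + real M' * E + \<alpha> \<kappa> \<le> Cb"
    and epsd: "eps = (2 * lbar + real N * Cb / real h + (2 * real h + 1) * (2 * lbar + real M' * E)) / real N"
    and epsk: "eps \<le> \<alpha> \<kappa>"
    and mpc: "mpc_feedback f X U l N \<mu>"
    and x0: "x0 \<in> X" and v0: "v0 \<in> adm f X U N x0"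
    and W0: "Jbeta f l N x0 v0 - ls * (real N + 1) / 2 + lam x0 + lbar \<le> Cb"
  shows "Jav f l x0 \<mu> \<le> ereal (ls + eps)"
proof -
  define Inv where "Inv y \<longleftrightarrow> y \<in> X \<and> (\<exists>v\<in>adm f X U N y. Jbeta f l N y v - ls * (real N + 1) / 2 + lam y + lbar \<le> Cb)" for y
  define Vr where "Vr y = real_of_ereal (Vbeta f X U l N y)" for y
  have Npos: "0 < real N" using hN by simp
  have optim: "\<exists>u\<in>adm f X U N y. Vr y = Jbeta f l N y u \<and> \<mu> y = u 0 \<and>
      (\<forall>v\<in>adm f X U N y. Jbeta f l N y u \<le> Jbeta f l N y v)" if iy: "Inv y" for y
  proof -
    have yX: "y \<in> X" and ne: "adm f X U N y \<noteq> {}" using iy by (auto simp: Inv_def)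
    obtain u where u: "u \<in> adm f X U N y" "ereal (Jbeta f l N y u) = Vbeta f X U l N y" "\<mu> y = u 0"
      using mpc yX ne unfolding mpc_feedback_def by blast
    have "Jbeta f l N y u \<le> Jbeta f l N y v" if "v \<in> adm f X U N y" for v
    proof -
      have "Vbeta f X U l N y \<le> ereal (Jbeta f l N y v)"
        unfolding Vbeta_def using that by (rule INF_lower)
      then have "ereal (Jbeta f l N y u) \<le> ereal (Jbeta f l N y v)" by (simp only: u(2))
      then show ?thesis by simp
    qed
    moreover have "Vr y = Jbeta f l N y u" using u(2) by (simp add: Vr_def flip: u(2))
    ultimately show ?thesis using u by blast
  qed
  have step: "Inv (f y (\<mu> y)) \<and> Vr (f y (\<mu> y)) \<le> Vr y - l y (\<mu> y) + ls + eps" if iy: "Inv y" for y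
  proof -
    obtain u where u: "u \<in> adm f X U N y" "Vr y = Jbeta f l N y u" "\<mu> y = u 0"
      and opt: "\<And>v. v \<in> adm f X U N y \<Longrightarrow> Jbeta f l N y u \<le> Jbeta f l N y v"
      using optim[OF iy] by blast
    obtain vw where vw: "vw \<in> adm f X U N y" "Jbeta f l N y vw - ls * (real N + 1) / 2 + lam y + lbar \<le> Cb"
      using iy by (auto simp: Inv_def)
    have yX: "y \<in> X" using iy by (simp add: Inv_def)
    have W: "Jbeta f l N y u - ls * (real N + 1) / 2 + lam y + lbar \<le> Cb"
      using opt[OF vw(1)] vw(2) by linarith
    obtain v1 where v1: "v1 \<in> adm f X U N (f y (u 0))"
      "Jbeta f l N (f y (u 0)) v1 \<le> Jbeta f l N y u - l y (u 0) + ls + eps"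
      "Jbeta f l N (f y (u 0)) v1 - ls * (real N + 1) / 2 + lam (f y (u 0)) + lbar \<le> Cb"
      using one_step[OF h1 hN big CbD epsd epsk yX u(1) opt W] by blast
    have y1X: "f y (u 0) \<in> X" using admD(2)[OF u(1), of 1] hN by simp
    have inv1: "Inv (f y (u 0))" unfolding Inv_def using y1X v1(1,3) by blast
    obtain u1 where u1: "u1 \<in> adm f X U N (f y (u 0))" "Vr (f y (u 0)) = Jbeta f l N (f y (u 0)) u1"
      and opt1: "\<forall>v\<in>adm f X U N (f y (u 0)). Jbeta f l N (f y (u 0)) u1 \<le> Jbeta f l N (f y (u 0)) v"
      using optim[OF inv1] by blast
    have "Vr (f y (u 0)) \<le> Vr y - l y (u 0) + ls + eps"
      using u1(2) opt1 v1(1,2) u(2) by fastforce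
    then show ?thesis using inv1 u(3) by simp
  qed
  have lowV: "ls * (real N + 1) / 2 - lbar - lam y \<le> Vr y \<and> Vr y - ls * (real N + 1) / 2 + lam y + lbar \<le> Cb"
    if iy: "Inv y" for y
  proof -
    obtain u where u: "u \<in> adm f X U N y" "Vr y = Jbeta f l N y u"
      and opt: "\<forall>v\<in>adm f X U N y. Jbeta f l N y u \<le> Jbeta f l N y v"
      using optim[OF iy] by blast
    obtain vw where vw: "vw \<in> adm f X U N y" "Jbeta f l N y vw - ls * (real N + 1) / 2 + lam y + lbar \<le> Cb"
      using iy by (auto simp: Inv_def)
    have yX: "y \<in> X" using iy by (simp add: Inv_def)
    have "ls * (real N * (real N + 1) / 2) - real N * lbar - real N * lam y \<le> S N y u"
      by (rule S_lower[OF yX u(1)])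
    moreover have "ls * (real N * (real N + 1) / 2) - real N * lbar - real N * lam y
       = real N * (ls * (real N + 1) / 2 - lbar - lam y)" by (simp add: algebra_simps)
    ultimately have "ls * (real N + 1) / 2 - lbar - lam y \<le> Jbeta f l N y u"
      using Npos by (simp add: Jbeta_S pos_le_divide_eq mult.commute)
    moreover have "Jbeta f l N y u \<le> Jbeta f l N y vw" using opt vw(1) by blast
    ultimately show ?thesis using u(2) vw(2) by linarith
  qed
  define cl where "cl t = cltraj f \<mu> x0 t" for t
  have clS: "cl (Suc t) = f (cl t) (\<mu> (cl t))" for t by (simp add: cl_def)
  have inv: "Inv (cl t)" for t
  proof (induction t)
    case 0 then show ?case using x0 v0 W0 by (auto simp: Inv_def cl_def)
  next
    case (Suc t) then show ?case using step clS by simp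
  qed
  have sumb: "(\<Sum>t<T. l (cl t) (\<mu> (cl t))) \<le> Vr (cl 0) - Vr (cl T) + real T * (ls + eps)" for T
  proof (induction T)
    case 0 then show ?case by simp
  next
    case (Suc T)
    have "Vr (cl (Suc T)) \<le> Vr (cl T) - l (cl T) (\<mu> (cl T)) + ls + eps"
      using step[OF inv[of T]] clS by simp
    then show ?case using Suc by (simp add: algebra_simps)
  qed
  have JTb: "JT f l T x0 \<mu> \<le> real T * (ls + eps) + (Cb + 2 * lbar)" for T
  proof -
    have "JT f l T x0 \<mu> = (\<Sum>t<T. l (cl t) (\<mu> (cl t)))" by (simp add: JT_def cl_def)
    moreover have "\<bar>lam (cl 0)\<bar> \<le> lbar" "\<bar>lam (cl T)\<bar> \<le> lbar"
      using inv[of 0] inv[of T] lamb by (auto simp: Inv_def)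
    ultimately show ?thesis using sumb[of T] lowV[OF inv[of 0]] lowV[OF inv[of T]] by linarith
  qed
  show ?thesis unfolding Jav_def by (rule limsup_avg_le) (use JTb in auto)
qed

end




lemma params:
  fixes a Cb K lb :: real and N :: nat
  assumes a: "0 < a" and Cb: "0 < Cb" and K: "0 \<le> K" and lb: "0 \<le> lb"
    and N: "nat \<lceil>(2 * sqrt (Cb / a) + 5)^2 + ((2 * lb + Cb / sqrt (Cb / a) + 2 * sqrt (Cb / a) * K + 5 * K) / a)^2\<rceil> + 1 \<le> N"
  shows "1 \<le> nat \<lceil>sqrt (Cb / a) * sqrt (real N)\<rceil> + 1
    \<and> 2 * (nat \<lceil>sqrt (Cb / a) * sqrt (real N)\<rceil> + 1) < N
    \<and> real N * Cb < real (nat \<lceil>sqrt (Cb / a) * sqrt (real N)\<rceil> + 1) * real (nat \<lceil>sqrt (Cb / a) * sqrt (real N)\<rceil> + 1) * a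
    \<and> (2 * lb + real N * Cb / real (nat \<lceil>sqrt (Cb / a) * sqrt (real N)\<rceil> + 1)
        + (2 * real (nat \<lceil>sqrt (Cb / a) * sqrt (real N)\<rceil> + 1) + 1) * K) / real N
       \<le> (2 * lb + Cb / sqrt (Cb / a) + 2 * sqrt (Cb / a) * K + 5 * K) / sqrt (real N)
    \<and> (2 * lb + Cb / sqrt (Cb / a) + 2 * sqrt (Cb / a) * K + 5 * K) / sqrt (real N) \<le> a"
proof -
  define c where "c = sqrt (Cb / a)"
  define A0 where "A0 = 2 * lb + Cb / c + 2 * c * K + 5 * K"
  define x where "x = sqrt (real N)"
  define h where "h = nat \<lceil>c * x\<rceil> + 1"
  have cpos: "0 < c" using a Cb by (simp add: c_def)
  have c2: "c * c = Cb / a" using a Cb by (simp add: c_def)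
  have A0nn: "0 \<le> A0" using cpos Cb K lb by (simp add: A0_def)
  have Nge: "(2 * c + 5)^2 + (A0 / a)^2 \<le> real N"
  proof -
    have "(2 * c + 5)^2 + (A0 / a)^2 \<le> real (nat \<lceil>(2 * c + 5)^2 + (A0 / a)^2\<rceil>)"
      by linarith
    then show ?thesis using N unfolding A0_def c_def by linarith
  qed
  have xx: "x * x = real N" by (simp add: x_def)
  have xnn: "0 \<le> x" by (simp add: x_def)
  have x1: "2 * c + 5 \<le> x"
  proof -
    have "(2 * c + 5)^2 \<le> real N" using Nge zero_le_power2[of "A0 / a"] zero_le_power2[of "2 * c + 5"] by linarith
    then have "sqrt ((2 * c + 5)^2) \<le> x" unfolding x_def by (rule real_sqrt_le_mono)
    then show ?thesis using cpos by simp
  qed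
  have x2: "A0 / a \<le> x"
  proof -
    have "(A0 / a)^2 \<le> real N" using Nge zero_le_power2[of "A0 / a"] zero_le_power2[of "2 * c + 5"] by linarith
    then have "sqrt ((A0 / a)^2) \<le> x" unfolding x_def by (rule real_sqrt_le_mono)
    then show ?thesis using A0nn a by simp
  qed
  have xge1: "1 \<le> x" using x1 cpos by linarith
  have Nx: "x \<le> real N" using mult_right_mono[OF xge1 xnn] xx by simp
  have cx: "0 \<le> c * x" using cpos xnn by simp
  have hr: "real h = real_of_int \<lceil>c * x\<rceil> + 1" using cx by (simp add: h_def)
  have hlo: "c * x + 1 \<le> real h" using hr by linarith
  have hhi: "real h \<le> c * x + 2" using hr by linarith
  have hpos: "0 < real h" using hlo cx by linarith
  have g1: "1 \<le> h" by (simp add: h_def)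
  have g2: "2 * h < N"
  proof -
    have "2 * real h < 2 * c * x + 5 * x" using hhi xge1 by linarith
    also have "\<dots> = x * (2 * c + 5)" by (simp add: algebra_simps)
    also have "\<dots> \<le> x * x" using x1 xnn by (intro mult_left_mono) auto
    finally have "real (2 * h) < real N" using xx by simp
    then show ?thesis by linarith
  qed
  have g3: "real N * Cb < real h * real h * a"
  proof -
    have "c * x < real h" using hlo by linarith
    then have "(c * x) * (c * x) < real h * real h" using cx by (intro mult_strict_mono) auto
    then have "(c * c) * (x * x) * a < real h * real h * a" using a by (simp add: algebra_simps)
    then show ?thesis using c2 xx a by (simp add: field_simps)
  qed
  have g4: "(2 * lb + real N * Cb / real h + (2 * real h + 1) * K) / real N \<le> A0 / x"
  proof -
    have Np: "0 < real N" using xx xge1 by (metis less_le_trans mult_pos_pos zero_less_one)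
    have t1: "2 * lb / real N \<le> 2 * lb / x" using Nx xge1 lb by (intro divide_left_mono) auto
    have t2: "Cb / real h \<le> (Cb / c) / x"
    proof -
      have "c * x \<le> real h" using hlo by linarith
      moreover have "0 < c * x" using cpos xge1 by simp
      ultimately have "Cb / real h \<le> Cb / (c * x)" using Cb hpos by (intro divide_left_mono) auto
      then show ?thesis by simp
    qed
    have t3: "(2 * real h + 1) * K / real N \<le> (2 * c * K) / x + 5 * K / x"
    proof -
      have "(2 * real h + 1) * K \<le> (2 * c * x + 5) * K" using hhi K by (intro mult_right_mono) auto
      then have "(2 * real h + 1) * K / real N \<le> (2 * c * x + 5) * K / real N" using Np by (intro divide_right_mono) auto
      also have "\<dots> = (2 * c * K) / x + 5 * K / real N"
      proof -
        have "2 * c * x * K / (x * x) = (2 * c * K) / x" using xge1 by (simp add: field_simps)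
        then have "2 * c * x * K / real N = (2 * c * K) / x" using xx by simp
        then show ?thesis by (simp add: distrib_right add_divide_distrib)
      qed
      also have "5 * K / real N \<le> 5 * K / x" using Nx xge1 K by (intro divide_left_mono) auto
      finally show ?thesis by simp
    qed
    have "(2 * lb + real N * Cb / real h + (2 * real h + 1) * K) / real N
        = 2 * lb / real N + Cb / real h + (2 * real h + 1) * K / real N"
      using Np by (simp add: field_simps)
    also have "\<dots> \<le> 2 * lb / x + (Cb / c) / x + ((2 * c * K) / x + 5 * K / x)" using t1 t2 t3 by linarith
    also have "\<dots> = A0 / x" by (simp add: A0_def add_divide_distrib)
    finally show ?thesis .
  qed
  have g5: "A0 / x \<le> a"
    using x2 a xge1 by (simp add: divide_le_eq pos_divide_le_eq mult.commute)
  show ?thesis using g1 g2 g3 g4 g5 unfolding h_def x_def A0_def c_def by blast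
qed


theorem theorem10:
  fixes f :: "'a::euclidean_space \<Rightarrow> 'b::euclidean_space \<Rightarrow> 'a"
    and X :: "'a set" and U :: "'b set" and l :: "'a \<Rightarrow> 'b \<Rightarrow> real"
    and Pstar :: "nat \<Rightarrow> 'a \<times> 'b" and ps :: nat
    and lam :: "'a \<Rightarrow> real" and lbar :: real and \<alpha> :: "real \<Rightarrow> real"
    and \<kappa> :: real and M' :: nat and \<rho> :: "real \<Rightarrow> real" and C :: real
  assumes A1: "continuous_on (X \<times> U) (\<lambda>(x, u). f x u)"
              "continuous_on (X \<times> U) (\<lambda>(x, u). l x u)"
              "compact X" "compact U"
    and opt_orbit: "feasible_orbit f X U Pstar ps"
              "orbit_avg l Pstar ps = ell_star f X U l"
    and A3: "\<forall>x\<in>X. \<bar>lam x\<bar> \<le> lbar" "class_Kinf \<alpha>"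
            "\<forall>x\<in>X. \<forall>u\<in>U. f x u \<in> X \<longrightarrow>
               l x u - ell_star f X U l + lam x - lam (f x u) \<ge> \<alpha> (orbit_dist Pstar ps (x, u))"
    and A4: "\<kappa> > 0" "class_Kinf \<rho>"
            "\<forall>k<ps. \<forall>x\<in>X. \<forall>y\<in>X. norm (x - fst (Pstar k)) \<le> \<kappa> \<and> norm (y - fst (Pstar k)) \<le> \<kappa> \<longrightarrow>
               (\<exists>u\<in>adm f X U M' x. traj f x u M' = y \<and>
                  (\<forall>j<M'. orbit_dist Pstar ps (traj f x u j, u j)
                        \<le> \<rho> (max (orbitX_dist Pstar ps x) (orbitX_dist Pstar ps y))))"
    and C_gt: "C > real M' * (ell_max X U l - ell_star f X U l) + 2 * lbar
                   + ell_star f X U l * real ps"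
  shows "\<exists>\<delta> N0. class_L \<delta> \<and> (\<forall>N\<ge>N0. \<forall>\<mu>. mpc_feedback f X U l N \<mu> \<longrightarrow>
           (\<forall>x\<in>Xpi f X U l lam lbar C N0.
              Jav f l x \<mu> \<le> ereal (ell_star f X U l + \<delta> (real N))))"
proof -
  define ls where "ls = ell_star f X U l"
  obtain Lmax where Lmax: "\<And>x u. x \<in> X \<Longrightarrow> u \<in> U \<Longrightarrow> l x u \<le> Lmax"
  proof -
    have "compact ((\<lambda>(x, u). l x u) ` (X \<times> U))"
      by (rule compact_continuous_image[OF A1(2) compact_Times[OF A1(3) A1(4)]])
    then have "bounded ((\<lambda>(x, u). l x u) ` (X \<times> U))" by (rule compact_imp_bounded)
    then obtain B where B: "\<forall>y\<in>(\<lambda>(x, u). l x u) ` (X \<times> U). \<bar>y\<bar> \<le> B"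
      by (auto simp: bounded_real)
    have "l x u \<le> B" if "x \<in> X" "u \<in> U" for x u
      using B that by force
    then show ?thesis using that by blast
  qed
  have A4w: "\<exists>u\<in>adm f X U M' x. traj f x u M' = y"
    if "k < ps" "x \<in> X" "y \<in> X" "norm (x - fst (Pstar k)) \<le> \<kappa>" "norm (y - fst (Pstar k)) \<le> \<kappa>" for k x y
    using A4(3) that by blast
  interpret M: mpcset f X U l Pstar ps lam lbar \<alpha> \<kappa> M' ls Lmax
  proof
    show "feasible_orbit f X U Pstar ps" by (rule opt_orbit(1))
    show "orbit_avg l Pstar ps = ls" using opt_orbit(2) by (simp add: ls_def)
    show "\<And>x. x \<in> X \<Longrightarrow> \<bar>lam x\<bar> \<le> lbar" using A3(1) by blast
    show "class_Kinf \<alpha>" by (rule A3(2))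
    show "\<And>x u. x \<in> X \<Longrightarrow> u \<in> U \<Longrightarrow> f x u \<in> X \<Longrightarrow>
               \<alpha> (orbit_dist Pstar ps (x, u)) \<le> l x u - ls + lam x - lam (f x u)"
      using A3(3) by (simp add: ls_def)
    show "\<kappa> > 0" by (rule A4(1))
    show "\<And>k x y. k < ps \<Longrightarrow> x \<in> X \<Longrightarrow> y \<in> X \<Longrightarrow> norm (x - fst (Pstar k)) \<le> \<kappa> \<Longrightarrow>
               norm (y - fst (Pstar k)) \<le> \<kappa> \<Longrightarrow> \<exists>u\<in>adm f X U M' x. traj f x u M' = y"
      by (rule A4w)
    show "\<And>x u. x \<in> X \<Longrightarrow> u \<in> U \<Longrightarrow> l x u \<le> Lmax" by (rule Lmax)
  qed
  define a where "a = \<alpha> \<kappa>"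
  define K where "K = 2 * lbar + real M' * M.E"
  define Cb where "Cb = max C (K + a)"
  define c where "c = sqrt (Cb / a)"
  define A0 where "A0 = 2 * lbar + Cb / c + 2 * c * K + 5 * K"
  define N0 where "N0 = nat \<lceil>(2 * c + 5)^2 + (A0 / a)^2\<rceil> + 1"
  define \<delta> where "\<delta> = (\<lambda>t::real. 2 * A0 / sqrt (t + 1))"
  have apos: "0 < a" using M.alpha_kpos by (simp add: a_def)
  have Knn: "0 \<le> K" using M.lbar_nn M.E_nn by (simp add: K_def)
  have Cbpos: "0 < Cb" using apos Knn by (simp add: Cb_def)
  have cpos: "0 < c" using apos Cbpos by (simp add: c_def)
  have A0nn: "0 \<le> A0" using M.lbar_nn Cbpos cpos Knn by (simp add: A0_def)
  have cL: "class_L \<delta>"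
    unfolding class_L_def
  proof (intro conjI allI impI)
    show "continuous_on {0..} \<delta>" unfolding \<delta>_def
      by (intro continuous_intros) auto
    show "0 \<le> \<delta> t" if "0 \<le> t" for t using A0nn that by (simp add: \<delta>_def)
    show "\<delta> t \<le> \<delta> s" if "0 \<le> s \<and> s \<le> t" for s t
    proof -
      have "sqrt (s + 1) \<le> sqrt (t + 1)" using that by simp
      moreover have "0 < sqrt (s + 1)" using that by simp
      ultimately show ?thesis unfolding \<delta>_def using A0nn by (intro divide_left_mono) auto
    qed
    show "(\<delta> \<longlongrightarrow> 0) at_top" unfolding \<delta>_def by real_asymp
  qed
  show ?thesis
  proof (intro exI[of _ \<delta>] exI[of _ N0] conjI cL allI impI ballI)
    fix N \<mu> x
    assume N: "N0 \<le> N" and mpc: "mpc_feedback f X U l N \<mu>" and x: "x \<in> Xpi f X U l lam lbar C N0"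
    define h where "h = nat \<lceil>c * sqrt (real N)\<rceil> + 1"
    define eps where "eps = (2 * lbar + real N * Cb / real h + (2 * real h + 1) * K) / real N"
    have PP: "1 \<le> h \<and> 2 * h < N \<and> real N * Cb < real h * real h * a
      \<and> eps \<le> A0 / sqrt (real N) \<and> A0 / sqrt (real N) \<le> a"
      using params[OF apos Cbpos Knn M.lbar_nn, of N] N
      unfolding h_def eps_def A0_def c_def N0_def by blast
    have h1: "1 \<le> h" and hN: "2 * h < N" and big: "real N * Cb < real h * real h * \<alpha> \<kappa>"
      and e1: "eps \<le> A0 / sqrt (real N)" and e2: "A0 / sqrt (real N) \<le> a"
      using PP by (simp_all add: a_def)
    have CbD: "2 * lbar + real M' * M.E + \<alpha> \<kappa> \<le> Cb" by (simp add: Cb_def K_def a_def)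
    have epsd: "eps = (2 * lbar + real N * Cb / real h + (2 * real h + 1) * (2 * lbar + real M' * M.E)) / real N"
      by (simp add: eps_def K_def)
    have epsk: "eps \<le> \<alpha> \<kappa>" using e1 e2 by (simp add: a_def)
    have xX: "x \<in> X" and xV: "Vbeta f X U l N x - ereal ((real N + 1) / 2 * ls) + ereal (lam x + lbar) \<le> ereal C"
      using x N by (auto simp: Xpi_def ls_def)
    have ne: "adm f X U N x \<noteq> {}"
    proof
      assume "adm f X U N x = {}"
      then have "Vbeta f X U l N x = \<infinity>" by (simp add: Vbeta_def top_ereal_def)
      then show False using xV by simp
    qed
    obtain u where u: "u \<in> adm f X U N x" "ereal (Jbeta f l N x u) = Vbeta f X U l N x"
      using mpc xX ne unfolding mpc_feedback_def by blast
    have "ereal (Jbeta f l N x u) - ereal ((real N + 1) / 2 * ls) + ereal (lam x + lbar) \<le> ereal C"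
      using xV u(2) by simp
    then have "Jbeta f l N x u - (real N + 1) / 2 * ls + (lam x + lbar) \<le> C" by simp
    then have W0: "Jbeta f l N x u - ls * (real N + 1) / 2 + lam x + lbar \<le> Cb"
      by (simp add: Cb_def algebra_simps)
    have "Jav f l x \<mu> \<le> ereal (ls + eps)"
      by (rule M.closed_loop[OF h1 hN big CbD epsd epsk mpc xX u(1) W0])
    also have "ereal (ls + eps) \<le> ereal (ls + \<delta> (real N))"
    proof -
      have Np: "1 \<le> real N" using hN by simp
      have "sqrt (real N + 1) \<le> 2 * sqrt (real N)"
      proof -
        have "sqrt (real N + 1) \<le> sqrt (4 * real N)" using Np by simp
        also have "sqrt (4 * real N) = 2 * sqrt (real N)" by (simp add: real_sqrt_mult)
        finally show ?thesis .
      qed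
      moreover have "0 < sqrt (real N + 1)" using Np by simp
      ultimately have "A0 / sqrt (real N) \<le> 2 * A0 / sqrt (real N + 1)"
        using A0nn Np by (simp add: field_simps mult_left_mono)
      then show ?thesis using e1 by (simp add: \<delta>_def)
    qed
    finally show "Jav f l x \<mu> \<le> ereal (ell_star f X U l + \<delta> (real N))" by (simp add: ls_def)
  qed
qed

end
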